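(* Let $n=2$, assume Assumptions A and B and $c_1^2+c_2^2>0$, and let $S$ be a solution of (IVP) on $[r_0,\infty)$ with $s_\infty=\lim_{r\to\infty}S(r)$. Then: (i) if $c_1\le0$ and $c_2\ge0$, then $s_\infty=1$; (ii) if $c_1\ge0$ and $c_2\le0$, then $s_\infty=0$; (iii) if $c_1,c_2<0$, then $s_\infty=s^*$; (iv) if $c_1,c_2>0$, then $s_\infty\in\{0,1,s^*\}$.
   Context: For $i=1,2$, $g_i(s)=a^{(i)}_0+a^{(i)}_1s^{\alpha^{(i)}_1}+\dots+a^{(i)}_{N_i}s^{\alpha^{(i)}_{N_i}}$ ($s\ge0$) with $N_i\ge0$, $a^{(i)}_0>0$, $a^{(i)}_j\ge0$, real $0<\alpha^{(i)}_1<\dots<\alpha^{(i)}_{N_i}$; $G_i(u)=g_i(|u|)u$ for $u\in\mathbb R$. Assumption A: $f_1,f_2\in C([0,1])\cap C^1((0,1))$, $f_1(0)=0$, $f_2(1)=0$, $f_1'>0$, $f_2'<0$ on $(0,1)$. Assumption B: $p_c'\in C^1((0,1))$, $p_c'>0$ on $(0,1)$. $F_i(S)=1/(p_c'(S)f_i(S))$. (IVP) with dimension $n$: $S'(r)=G_2(c_2r^{1-n})F_2(S)-G_1(c_1r^{1-n})F_1(S)$ for $r>r_0$, $S(r_0)=s_0\in(0,1)$, $0<S<1$. The limit $s_\infty$ exists for any solution on $[r_0,\infty)$. $f=f_1/f_2$ is a strictly increasing bijection $(0,1)\to(0,\infty)$; when $c_1c_2>0$, $s^*=f^{-1}\big(c_1a^{(1)}_0/(c_2a^{(2)}_0)\big)\in(0,1)$.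 *)

theory Defs
  imports "HOL-Analysis.Analysis"
begin

definition gfun :: "real \<Rightarrow> (nat \<Rightarrow> real) \<Rightarrow> (nat \<Rightarrow> real) \<Rightarrow> nat \<Rightarrow> real \<Rightarrow> real" where
  "gfun a0 a \<alpha> N s = a0 + (\<Sum>j=1..N. a j * s powr \<alpha> j)"

definition Gfun :: "real \<Rightarrow> (nat \<Rightarrow> real) \<Rightarrow> (nat \<Rightarrow> real) \<Rightarrow> nat \<Rightarrow> real \<Rightarrow> real" where
  "Gfun a0 a \<alpha> N u = gfun a0 a \<alpha> N \<bar>u\<bar> * u"

definition admissible_g :: "real \<Rightarrow> (nat \<Rightarrow> real) \<Rightarrow> (nat \<Rightarrow> real) \<Rightarrow> nat \<Rightarrow> bool" where
  "admissible_g a0 a \<alpha> N \<longleftrightarrow> a0 > 0 \<and> (\<forall>j\<in>{1..N}. a j \<ge> 0) \<and>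
     (N \<ge> 1 \<longrightarrow> \<alpha> 1 > 0) \<and> (\<forall>j\<in>{1..<N}. \<alpha> j < \<alpha> (Suc j))"

definition sstar :: "(real \<Rightarrow> real) \<Rightarrow> (real \<Rightarrow> real) \<Rightarrow> real \<Rightarrow> real \<Rightarrow> real \<Rightarrow> real \<Rightarrow> real" where
  "sstar f1 f2 c1 c2 a01 a02 =
     (THE s. s \<in> {0<..<1} \<and> f1 s / f2 s = c1 * a01 / (c2 * a02))"

end

theory Submission imports Defs begin

lemma alpha_pos:
  assumes "admissible_g a0 a \<alpha> N" "j \<in> {1..N}" shows "\<alpha> j > 0"
  using assms(2)
proof (induction j)
  case 0 then show ?case by simp
next
  case (Suc j)
  show ?case
  proof (cases "j = 0")
    case True then show ?thesis using assms(1) Suc.prems unfolding admissible_g_def by auto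
  next
    case False
    then have "j \<in> {1..N}" "j \<in> {1..<N}" using Suc.prems by auto
    with Suc.IH have "\<alpha> j > 0" by auto
    moreover have "\<alpha> j < \<alpha> (Suc j)" using assms(1) \<open>j \<in> {1..<N}\<close> unfolding admissible_g_def by auto
    ultimately show ?thesis by linarith
  qed
qed

lemma gfun_ge:
  assumes "admissible_g a0 a \<alpha> N" "s \<ge> 0" shows "gfun a0 a \<alpha> N s \<ge> a0"
proof -
  have "(\<Sum>j=1..N. a j * s powr \<alpha> j) \<ge> 0"
    using assms unfolding admissible_g_def by (intro sum_nonneg) auto
  then show ?thesis unfolding gfun_def by simp
qed

lemma h_eq:
  assumes "r > 0"
  shows "r * Gfun a0 a \<alpha> N (c * r powr (1-2)) = gfun a0 a \<alpha> N (\<bar>c\<bar>/r) * c"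
proof -
  have "r powr (1-2) = 1/r" using assms by (simp add: powr_minus_divide)
  then show ?thesis using assms unfolding Gfun_def by (simp add: abs_mult)
qed

lemma h_lim:
  assumes "admissible_g a0 a \<alpha> N"
  shows "((\<lambda>r. r * Gfun a0 a \<alpha> N (c * r powr (1-2))) \<longlongrightarrow> a0 * c) at_top"
proof -
  have lim0: "((\<lambda>r::real. \<bar>c\<bar>/r) \<longlongrightarrow> 0) at_top"
    by (intro tendsto_divide_0[OF tendsto_const] filterlim_at_top_imp_at_infinity filterlim_ident)
  have "((\<lambda>r. gfun a0 a \<alpha> N (\<bar>c\<bar>/r)) \<longlongrightarrow> a0 + (\<Sum>j=1..N. a j * 0)) at_top"
    unfolding gfun_def
  proof (intro tendsto_add tendsto_const tendsto_sum tendsto_mult)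
    fix j assume "j \<in> {1..N}"
    then have "\<alpha> j > 0" using alpha_pos assms by blast
    then show "((\<lambda>r. (\<bar>c\<bar>/r) powr \<alpha> j) \<longlongrightarrow> 0) at_top"
      by (intro tendsto_zero_powrI[OF lim0 tendsto_const]) (auto intro: eventually_mono[OF eventually_ge_at_top[of 0]])
  qed
  then have L: "((\<lambda>r. gfun a0 a \<alpha> N (\<bar>c\<bar>/r) * c) \<longlongrightarrow> a0 * c) at_top"
    by (auto intro: tendsto_mult tendsto_const)
  have E: "eventually (\<lambda>r. gfun a0 a \<alpha> N (\<bar>c\<bar>/r) * c = r * Gfun a0 a \<alpha> N (c * r powr (1-2))) at_top"
    using eventually_gt_at_top[of 0] by eventually_elim (rule h_eq[symmetric])
  show ?thesis using L tendsto_cong[OF E] by simp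
qed

lemma mono_from:
  fixes S S' :: "real \<Rightarrow> real"
  assumes "\<And>r. r > R0 \<Longrightarrow> (S has_real_derivative S' r) (at r)"
    "\<And>r. r \<ge> R \<Longrightarrow> S' r \<ge> 0" "R > R0" "x \<ge> R"
  shows "S R \<le> S x"
  using assms by (intro DERIV_nonneg_imp_nondecreasing[OF assms(4)]) (metis less_le_trans)

lemma log_div:
  fixes S S' :: "real \<Rightarrow> real"
  assumes der: "\<And>r. r > R0 \<Longrightarrow> (S has_real_derivative S' r) (at r)"
    and ev: "eventually (\<lambda>r. S' r \<ge> m / r) at_top" and m: "m > 0"
    and bd: "\<And>r. r > R0 \<Longrightarrow> S r \<le> B"
  shows False
proof -
  obtain R where R: "\<And>r. r \<ge> R \<Longrightarrow> S' r \<ge> m / r" using ev by (auto simp: eventually_at_top_linorder)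
  define R1 where "R1 = max R (max R0 1) + 1"
  have R1: "R1 > R0" "R1 > 0" "R1 \<ge> R" unfolding R1_def by auto
  define \<phi> where "\<phi> r = S r - m * ln r" for r
  have phi: "\<phi> R1 \<le> \<phi> x" if "x \<ge> R1" for x
  proof (rule DERIV_nonneg_imp_nondecreasing[OF that])
    fix y assume y: "R1 \<le> y" "y \<le> x"
    then have "y > 0" "y > R0" using R1 by auto
    have "(\<phi> has_real_derivative S' y - m * (1/y)) (at y)"
      unfolding \<phi>_def using der[OF \<open>y > R0\<close>] \<open>y>0\<close>
      by (auto intro!: derivative_eq_intros)
    moreover have "S' y - m * (1/y) \<ge> 0" using R[of y] y R1 by simp
    ultimately show "\<exists>d. (\<phi> has_real_derivative d) (at y) \<and> d \<ge> 0" by blast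
  qed
  define T where "T = max (ln R1) ((B - S R1)/m + ln R1 + 1)"
  have x: "exp T \<ge> R1" unfolding T_def using R1
    by (metis exp_ln max.cobounded1 exp_le_cancel_iff)
  have "\<phi> R1 \<le> \<phi> (exp T)" using phi x by blast
  then have "S (exp T) \<ge> S R1 + m * (T - ln R1)" unfolding \<phi>_def by (simp add: algebra_simps)
  moreover have "m * (T - ln R1) \<ge> m * ((B - S R1)/m + 1)"
    using m unfolding T_def by (intro mult_left_mono) auto
  moreover have "m * ((B - S R1)/m + 1) = B - S R1 + m" using m by (simp add: field_simps)
  moreover have "S (exp T) \<le> B" using bd x R1 by auto
  ultimately show False using m by linarith
qed

theorem theorem2p5:
  fixes a01 a02 :: real and a1 a2 \<alpha>1 \<alpha>2 :: "nat \<Rightarrow> real" and N1 N2 :: nat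
    and f1 f2 f1' f2' pc dpc ddpc :: "real \<Rightarrow> real"
    and c1 c2 r0 s0 s_inf :: real and S S' :: "real \<Rightarrow> real"
  assumes g1: "admissible_g a01 a1 \<alpha>1 N1"
    and g2: "admissible_g a02 a2 \<alpha>2 N2"
    \<comment> \<open>Assumption A\<close>
    and f1_cont: "continuous_on {0..1} f1" and f2_cont: "continuous_on {0..1} f2"
    and f1_der: "\<And>x. x \<in> {0<..<1} \<Longrightarrow> (f1 has_real_derivative f1' x) (at x)"
    and f2_der: "\<And>x. x \<in> {0<..<1} \<Longrightarrow> (f2 has_real_derivative f2' x) (at x)"
    and f1'_cont: "continuous_on {0<..<1} f1'" and f2'_cont: "continuous_on {0<..<1} f2'"
    and f1_0: "f1 0 = 0" and f2_1: "f2 1 = 0"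
    and f1'_pos: "\<And>x. x \<in> {0<..<1} \<Longrightarrow> f1' x > 0"
    and f2'_neg: "\<And>x. x \<in> {0<..<1} \<Longrightarrow> f2' x < 0"
    \<comment> \<open>Assumption B: p_c' exists on (0,1), is C^1 there and positive\<close>
    and pc_der: "\<And>x. x \<in> {0<..<1} \<Longrightarrow> (pc has_real_derivative dpc x) (at x)"
    and dpc_der: "\<And>x. x \<in> {0<..<1} \<Longrightarrow> (dpc has_real_derivative ddpc x) (at x)"
    and ddpc_cont: "continuous_on {0<..<1} ddpc"
    and dpc_pos: "\<And>x. x \<in> {0<..<1} \<Longrightarrow> dpc x > 0"
    \<comment> \<open>parameters\<close>
    and c_nz: "c1\<^sup>2 + c2\<^sup>2 > 0"
    and r0_pos: "r0 > 0"
    \<comment> \<open>S solves (IVP) with n = 2 on [r0, \<infinity>)\<close>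
    and S_cont: "continuous_on {r0..} S"
    and S_der: "\<And>r. r > r0 \<Longrightarrow> (S has_real_derivative S' r) (at r)"
    and S_ode: "\<And>r. r > r0 \<Longrightarrow>
        S' r = Gfun a02 a2 \<alpha>2 N2 (c2 * r powr (1 - 2)) * (1 / (dpc (S r) * f2 (S r)))
             - Gfun a01 a1 \<alpha>1 N1 (c1 * r powr (1 - 2)) * (1 / (dpc (S r) * f1 (S r)))"
    and S_init: "S r0 = s0" and s0_in: "s0 \<in> {0<..<1}"
    and S_range: "\<And>r. r \<ge> r0 \<Longrightarrow> 0 < S r \<and> S r < 1"
    and S_lim: "(S \<longlongrightarrow> s_inf) at_top"
  shows "(c1 \<le> 0 \<and> c2 \<ge> 0 \<longrightarrow> s_inf = 1)
       \<and> (c1 \<ge> 0 \<and> c2 \<le> 0 \<longrightarrow> s_inf = 0)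
       \<and> (c1 < 0 \<and> c2 < 0 \<longrightarrow> s_inf = sstar f1 f2 c1 c2 a01 a02)
       \<and> (c1 > 0 \<and> c2 > 0 \<longrightarrow> s_inf \<in> {0, 1, sstar f1 f2 c1 c2 a01 a02})"
proof -
  have a01: "a01 > 0" and a02: "a02 > 0" using g1 g2 unfolding admissible_g_def by auto
  have f1_mono: "f1 x < f1 y" if "0 \<le> x" "x < y" "y \<le> 1" for x y
  proof (rule DERIV_pos_imp_increasing_open[OF that(2)])
    fix t assume "x < t" "t < y"
    then have "t \<in> {0<..<1}" using that by auto
    then show "\<exists>d. (f1 has_real_derivative d) (at t) \<and> d > 0" using f1_der f1'_pos by blast
  next
    show "continuous_on {x..y} f1" by (rule continuous_on_subset[OF f1_cont]) (use that in auto)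
  qed
  have f2_mono: "f2 y < f2 x" if "0 \<le> x" "x < y" "y \<le> 1" for x y
  proof (rule DERIV_neg_imp_decreasing_open[OF that(2)])
    fix t assume "x < t" "t < y"
    then have "t \<in> {0<..<1}" using that by auto
    then show "\<exists>d. (f2 has_real_derivative d) (at t) \<and> d < 0" using f2_der f2'_neg by blast
  next
    show "continuous_on {x..y} f2" by (rule continuous_on_subset[OF f2_cont]) (use that in auto)
  qed
  have f1_pos: "f1 x > 0" if "0 < x" "x \<le> 1" for x using f1_mono[of 0 x] that f1_0 by simp
  have f2_pos: "f2 x > 0" if "0 \<le> x" "x < 1" for x using f2_mono[of x 1] that f2_1 by simp
  have ratio_mono: "f1 x / f2 x < f1 y / f2 y" if "0 < x" "x < y" "y < 1" for x y
  proof -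
    have "f1 x / f2 x < f1 y / f2 x"
      using f1_mono[of x y] f2_pos[of x] that by (intro divide_strict_right_mono) auto
    also have "\<dots> < f1 y / f2 y"
      using f2_mono[of x y] f2_pos[of y] f1_pos[of y] that by (intro divide_strict_left_mono) auto
    finally show ?thesis .
  qed
  define h1 where "h1 r = r * Gfun a01 a1 \<alpha>1 N1 (c1 * r powr (1-2))" for r
  define h2 where "h2 r = r * Gfun a02 a2 \<alpha>2 N2 (c2 * r powr (1-2))" for r
  have hl1: "(h1 \<longlongrightarrow> a01 * c1) at_top" unfolding h1_def by (rule h_lim[OF g1])
  have hl2: "(h2 \<longlongrightarrow> a02 * c2) at_top" unfolding h2_def by (rule h_lim[OF g2])
  have h1_eq: "h1 r = gfun a01 a1 \<alpha>1 N1 (\<bar>c1\<bar>/r) * c1" if "r > 0" for r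
    unfolding h1_def using h_eq[OF that] by blast
  have h2_eq: "h2 r = gfun a02 a2 \<alpha>2 N2 (\<bar>c2\<bar>/r) * c2" if "r > 0" for r
    unfolding h2_def using h_eq[OF that] by blast
  have gp1: "gfun a01 a1 \<alpha>1 N1 (\<bar>c1\<bar>/r) > 0" if "r > 0" for r
    using gfun_ge[OF g1, of "\<bar>c1\<bar>/r"] that a01 by auto
  have gp2: "gfun a02 a2 \<alpha>2 N2 (\<bar>c2\<bar>/r) > 0" if "r > 0" for r
    using gfun_ge[OF g2, of "\<bar>c2\<bar>/r"] that a02 by auto
  define B where "B r = h2 r / f2 (S r) - h1 r / f1 (S r)" for r
  have SR: "0 < S r" "S r < 1" if "r \<ge> r0" for r using S_range[OF that] by auto
  have dpcS: "dpc (S r) > 0" if "r \<ge> r0" for r using dpc_pos SR[OF that] by auto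
  have ode: "S' r = B r / (r * dpc (S r))" if "r > r0" for r
  proof -
    have r: "r > 0" using that r0_pos by linarith
    have e1: "Gfun a01 a1 \<alpha>1 N1 (c1 * r powr (1-2)) = h1 r / r" unfolding h1_def using r by simp
    have e2: "Gfun a02 a2 \<alpha>2 N2 (c2 * r powr (1-2)) = h2 r / r" unfolding h2_def using r by simp
    have "f1 (S r) > 0" "f2 (S r) > 0" "dpc (S r) > 0" using SR[of r] f1_pos f2_pos dpcS[of r] that by auto
    then show ?thesis using S_ode[OF that] r unfolding e1 e2 B_def by (simp add: field_simps)
  qed
  have sinf_ge: "0 \<le> s_inf" 
    by (rule tendsto_lowerbound[OF S_lim]) (auto intro!: eventually_mono[OF eventually_ge_at_top[of r0]] dest: SR)
  have sinf_le: "s_inf \<le> 1" 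
    by (rule tendsto_upperbound[OF S_lim]) (auto intro!: eventually_mono[OF eventually_ge_at_top[of r0]] dest: SR)
  have evS: "\<forall>\<^sub>F r in at_top. S r \<in> {0..1}"
    by (auto intro!: eventually_mono[OF eventually_ge_at_top[of r0]] dest: SR simp: less_imp_le)
  have fS1: "((\<lambda>r. f1 (S r)) \<longlongrightarrow> f1 s_inf) at_top"
    by (rule continuous_on_tendsto_compose[OF f1_cont S_lim _ evS]) (use sinf_ge sinf_le in auto)
  have fS2: "((\<lambda>r. f2 (S r)) \<longlongrightarrow> f2 s_inf) at_top"
    by (rule continuous_on_tendsto_compose[OF f2_cont S_lim _ evS]) (use sinf_ge sinf_le in auto)
  have interior: "a02 * c2 / f2 s_inf - a01 * c1 / f1 s_inf = 0" if si: "0 < s_inf" "s_inf < 1"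
  proof (rule ccontr)
    define L where "L = a02 * c2 / f2 s_inf - a01 * c1 / f1 s_inf"
    assume "L \<noteq> 0" 
    have f1s: "f1 s_inf > 0" and f2s: "f2 s_inf > 0" using f1_pos f2_pos si by auto
    have BL: "(B \<longlongrightarrow> L) at_top" unfolding B_def L_def
      using f1s f2s by (intro tendsto_intros hl1 hl2 fS1 fS2) auto
    define D where "D = dpc s_inf"
    have D: "D > 0" unfolding D_def using dpc_pos si by auto
    have "isCont dpc s_inf" using dpc_der si by (intro DERIV_isCont) auto
    then have dL: "((\<lambda>r. dpc (S r)) \<longlongrightarrow> D) at_top" unfolding D_def
      using S_lim by (rule isCont_tendsto_compose)
    have evD: "\<forall>\<^sub>F r in at_top. dpc (S r) < 2 * D" using order_tendstoD(2)[OF dL] D by simp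
    have evr: "\<forall>\<^sub>F r in at_top. r > r0" by (rule eventually_gt_at_top)
    show False
    proof (cases "L > 0")
      case True
      have evB: "\<forall>\<^sub>F r in at_top. B r > L/2" using order_tendstoD(1)[OF BL, of "L/2"] True by simp
      have "\<forall>\<^sub>F r in at_top. S' r \<ge> (L / (4 * D)) / r"
        using evB evD evr
      proof eventually_elim
        case (elim r)
        have r: "r > 0" using elim r0_pos by linarith
        have dp: "dpc (S r) > 0" using dpcS elim by auto
        have "(L/2) / (r * (2 * D)) \<le> B r / (r * dpc (S r))"
          using elim True r dp by (intro frac_le) (auto intro: mult_left_mono)
        moreover have "(L/2) / (r * (2 * D)) = (L / (4 * D)) / r" by (simp add: field_simps)
        ultimately show ?case using ode[of r] elim by (metis minus_divide_left)
      qed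
      then show False using S_der
        by (intro log_div[of r0 S S' "L / (4 * D)" 1]) (use True D SR in \<open>auto simp: less_imp_le\<close>)
    next
      case False
      then have Ln: "L < 0" using \<open>L \<noteq> 0\<close> by simp
      have evB: "\<forall>\<^sub>F r in at_top. B r < L/2" using order_tendstoD(2)[OF BL, of "L/2"] Ln by simp
      have "\<forall>\<^sub>F r in at_top. - S' r \<ge> (- L / (4 * D)) / r"
        using evB evD evr
      proof eventually_elim
        case (elim r)
        have r: "r > 0" using elim r0_pos by linarith
        have dp: "dpc (S r) > 0" using dpcS elim by auto
        have "(-L/2) / (r * (2 * D)) \<le> (- B r) / (r * dpc (S r))"
          using elim Ln r dp by (intro frac_le) (auto intro: mult_left_mono)
        moreover have "(-L/2) / (r * (2 * D)) = (- L / (4 * D)) / r" by (simp add: field_simps)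
        ultimately show ?case using ode[of r] elim by (metis minus_divide_left)
      qed
      then show False
        by (intro log_div[of r0 "\<lambda>r. - S r" "\<lambda>r. - S' r" "- L / (4 * D)" 0])
           (use Ln D SR S_der in \<open>auto intro: derivative_intros simp: less_imp_le divide_neg_pos\<close>)
    qed
  qed
  have lower: "s_inf \<ge> S R" if "R > r0" "\<And>r. r \<ge> R \<Longrightarrow> S' r \<ge> 0" for R
  proof (rule tendsto_lowerbound[OF S_lim])
    show "\<forall>\<^sub>F x in at_top. S R \<le> S x"
      using eventually_ge_at_top[of R] by eventually_elim (rule mono_from[OF S_der that(2) that(1)])
  qed simp
  have upper: "s_inf \<le> S R" if "R > r0" "\<And>r. r \<ge> R \<Longrightarrow> S' r \<le> 0" for R
  proof (rule tendsto_upperbound[OF S_lim])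
    show "\<forall>\<^sub>F x in at_top. S x \<le> S R"
      using eventually_ge_at_top[of R]
    proof eventually_elim
      case (elim x)
      have "- S R \<le> - S x"
        by (rule mono_from[of r0 "\<lambda>r. - S r" "\<lambda>r. - S' r" R x])
           (use S_der that elim in \<open>auto intro: derivative_intros\<close>)
      then show ?case by simp
    qed
  qed simp
  have Bsign: "S' r \<ge> 0 \<longleftrightarrow> B r \<ge> 0" "S' r \<le> 0 \<longleftrightarrow> B r \<le> 0" if "r > r0" for r
  proof -
    have "r * dpc (S r) > 0" using that r0_pos dpcS[of r] by simp
    then show "S' r \<ge> 0 \<longleftrightarrow> B r \<ge> 0" "S' r \<le> 0 \<longleftrightarrow> B r \<le> 0" 
      unfolding ode[OF that] by (auto simp: zero_le_divide_iff divide_le_0_iff)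
  qed
  have sstar_eq: "sstar f1 f2 c1 c2 a01 a02 = s_inf" if "0 < s_inf" "s_inf < 1" "c2 \<noteq> 0"
  proof -
    have f1s: "f1 s_inf > 0" and f2s: "f2 s_inf > 0" using f1_pos f2_pos that by auto
    have eq: "f1 s_inf / f2 s_inf = c1 * a01 / (c2 * a02)"
      using interior[OF that(1,2)] f1s f2s a02 that(3) by (simp add: field_simps)
    show ?thesis unfolding sstar_def
    proof (rule the_equality)
      show "s_inf \<in> {0<..<1} \<and> f1 s_inf / f2 s_inf = c1 * a01 / (c2 * a02)" using that eq by auto
    next
      fix t assume t: "t \<in> {0<..<1} \<and> f1 t / f2 t = c1 * a01 / (c2 * a02)"
      show "t = s_inf"
      proof (cases t s_inf rule: linorder_cases)
        case less then show ?thesis using ratio_mono[of t s_inf] t eq that by auto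
      next
        case greater then show ?thesis using ratio_mono[of s_inf t] t eq that by auto
      qed simp
    qed
  qed
  have cnz: "c1 \<noteq> 0 \<or> c2 \<noteq> 0" using c_nz by auto
  have hs1: "(c1 \<le> 0 \<longrightarrow> h1 r \<le> 0) \<and> (c1 \<ge> 0 \<longrightarrow> h1 r \<ge> 0)" if "r > r0" for r
    using h1_eq[of r] gp1[of r] that r0_pos by (auto simp: mult_le_0_iff zero_le_mult_iff)
  have hs2: "(c2 \<le> 0 \<longrightarrow> h2 r \<le> 0) \<and> (c2 \<ge> 0 \<longrightarrow> h2 r \<ge> 0)" if "r > r0" for r
    using h2_eq[of r] gp2[of r] that r0_pos by (auto simp: mult_le_0_iff zero_le_mult_iff)
  have fSp: "f1 (S r) > 0" "f2 (S r) > 0" if "r \<ge> r0" for r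
    using f1_pos f2_pos SR[OF that] by auto
  have R1: "r0 + 1 > r0" by simp
  have part1: "s_inf = 1" if c: "c1 \<le> 0" "c2 \<ge> 0"
  proof -
    have "B r \<ge> 0" if "r > r0" for r
    proof -
      have "h2 r / f2 (S r) \<ge> 0" using hs2[OF that] c fSp[of r] that by (auto intro: divide_nonneg_pos)
      moreover have "h1 r / f1 (S r) \<le> 0" using hs1[OF that] c fSp[of r] that by (auto intro: divide_nonpos_pos)
      ultimately show ?thesis unfolding B_def by simp
    qed
    then have "s_inf \<ge> S (r0 + 1)" using Bsign by (intro lower[OF R1]) auto
    then have pos: "s_inf > 0" using SR[of "r0+1"] by simp
    show ?thesis
    proof (rule ccontr)
      assume "s_inf \<noteq> 1" then have lt: "s_inf < 1" using sinf_le by simp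
      have f1s: "f1 s_inf > 0" and f2s: "f2 s_inf > 0" using f1_pos f2_pos pos lt by auto
      have "a02 * c2 / f2 s_inf \<ge> 0" using c a02 f2s by (auto intro: divide_nonneg_pos)
      moreover have "a01 * c1 / f1 s_inf \<le> 0" using c a01 f1s by (auto intro: divide_nonpos_pos simp: mult_le_0_iff)
      moreover have "a02 * c2 / f2 s_inf > 0 \<or> a01 * c1 / f1 s_inf < 0"
      proof -
        have "a01 * c1 < 0 \<or> a02 * c2 > 0" using cnz c a01 a02 by (auto simp: mult_pos_neg)
        then show ?thesis using f1s f2s by (auto simp: divide_neg_pos)
      qed
      ultimately show False using interior[OF pos lt] by linarith
    qed
  qed
  have part2: "s_inf = 0" if c: "c1 \<ge> 0" "c2 \<le> 0"
  proof -
    have "B r \<le> 0" if "r > r0" for r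
    proof -
      have "h2 r / f2 (S r) \<le> 0" using hs2[OF that] c fSp[of r] that by (auto intro: divide_nonpos_pos)
      moreover have "h1 r / f1 (S r) \<ge> 0" using hs1[OF that] c fSp[of r] that by (auto intro: divide_nonneg_pos)
      ultimately show ?thesis unfolding B_def by simp
    qed
    then have "s_inf \<le> S (r0 + 1)" using Bsign by (intro upper[OF R1]) auto
    then have lt: "s_inf < 1" using SR[of "r0+1"] by simp
    show ?thesis
    proof (rule ccontr)
      assume "s_inf \<noteq> 0" then have pos: "s_inf > 0" using sinf_ge by simp
      have f1s: "f1 s_inf > 0" and f2s: "f2 s_inf > 0" using f1_pos f2_pos pos lt by auto
      have "a02 * c2 / f2 s_inf \<le> 0" using c a02 f2s by (auto intro: divide_nonpos_pos simp: mult_le_0_iff)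
      moreover have "a01 * c1 / f1 s_inf \<ge> 0" using c a01 f1s by (auto intro: divide_nonneg_pos)
      moreover have "a02 * c2 / f2 s_inf < 0 \<or> a01 * c1 / f1 s_inf > 0"
      proof -
        have "a02 * c2 < 0 \<or> a01 * c1 > 0" using cnz c a01 a02 by (auto simp: mult_pos_neg)
        then show ?thesis using f1s f2s by (auto simp: divide_neg_pos)
      qed
      ultimately show False using interior[OF pos lt] by linarith
    qed
  qed
  have part3: "s_inf = sstar f1 f2 c1 c2 a01 a02" if c: "c1 < 0" "c2 < 0"
  proof -
    have ev_r: "\<forall>\<^sub>F r in at_top. r \<ge> r0" by (rule eventually_ge_at_top)
    have ne0: "s_inf \<noteq> 0"
    proof
      assume s0: "s_inf = 0"
      have "LIM r at_top. inverse (f1 (S r)) :> at_top"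
        using fS1 f1_0 s0 by (intro filterlim_inverse_at_top) (auto intro: eventually_mono[OF ev_r] fSp)
      then have "LIM r at_top. (- h1 r) * inverse (f1 (S r)) :> at_top"
        using a01 c by (intro filterlim_tendsto_pos_mult_at_top[OF tendsto_minus[OF hl1]]) (auto simp: mult_pos_neg)
      then have "LIM r at_top. h2 r / f2 (S r) + (- h1 r) * inverse (f1 (S r)) :> at_top"
        using f2_pos[of 0] s0 by (intro filterlim_tendsto_add_at_top[OF tendsto_divide[OF hl2 fS2]]) auto
      then have "\<forall>\<^sub>F r in at_top. 0 \<le> h2 r / f2 (S r) + (- h1 r) * inverse (f1 (S r))"
        unfolding filterlim_at_top by blast
      then obtain R where R: "\<And>r. r \<ge> R \<Longrightarrow> 0 \<le> h2 r / f2 (S r) + (- h1 r) * inverse (f1 (S r))"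
        by (auto simp: eventually_at_top_linorder)
      define R' where "R' = max R (r0 + 1)"
      have "B r \<ge> 0" if "r \<ge> R'" for r using R[of r] that unfolding R'_def B_def
        by (simp add: divide_inverse)
      then have "s_inf \<ge> S R'" using Bsign unfolding R'_def by (intro lower) auto
      moreover have "S R' > 0" using SR[of R'] unfolding R'_def by simp
      ultimately show False using s0 by simp
    qed
    have ne1: "s_inf \<noteq> 1"
    proof
      assume s1: "s_inf = 1"
      have "LIM r at_top. inverse (f2 (S r)) :> at_top"
        using fS2 f2_1 s1 by (intro filterlim_inverse_at_top) (auto intro: eventually_mono[OF ev_r] fSp)
      then have "LIM r at_top. (- h2 r) * inverse (f2 (S r)) :> at_top"
        using a02 c by (intro filterlim_tendsto_pos_mult_at_top[OF tendsto_minus[OF hl2]]) (auto simp: mult_pos_neg)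
      then have "LIM r at_top. h1 r / f1 (S r) + (- h2 r) * inverse (f2 (S r)) :> at_top"
        using f1_pos[of 1] s1 by (intro filterlim_tendsto_add_at_top[OF tendsto_divide[OF hl1 fS1]]) auto
      then have "\<forall>\<^sub>F r in at_top. 0 \<le> h1 r / f1 (S r) + (- h2 r) * inverse (f2 (S r))"
        unfolding filterlim_at_top by blast
      then obtain R where R: "\<And>r. r \<ge> R \<Longrightarrow> 0 \<le> h1 r / f1 (S r) + (- h2 r) * inverse (f2 (S r))"
        by (auto simp: eventually_at_top_linorder)
      define R' where "R' = max R (r0 + 1)"
      have "B r \<le> 0" if "r \<ge> R'" for r using R[of r] that unfolding R'_def B_def
        by (simp add: divide_inverse)
      then have "s_inf \<le> S R'" using Bsign unfolding R'_def by (intro upper) auto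
      moreover have "S R' < 1" using SR[of R'] unfolding R'_def by simp
      ultimately show False using s1 by simp
    qed
    show ?thesis using sstar_eq ne0 ne1 sinf_ge sinf_le c by force
  qed
  have part4: "s_inf \<in> {0, 1, sstar f1 f2 c1 c2 a01 a02}" if c: "c1 > 0" "c2 > 0"
  proof (cases "s_inf = 0 \<or> s_inf = 1")
    case True then show ?thesis by auto
  next
    case False then show ?thesis using sstar_eq sinf_ge sinf_le c by force
  qed
  show ?thesis using part1 part2 part3 part4 by blast
qed

end
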